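(* For $k\in\mathbb{N}$ let $C(k)=\dfrac{2\,(4^{k}-3k-1)}{(2k+1)!}$. (i) For every $x\in(0,\pi/2)$ and every $n\in\mathbb{N}$, $$3+\frac{1}{\cos x}\sum_{k=2}^{2n+1}(-1)^{k}C(k)\,x^{2k}<2\,\frac{\sin x}{x}+\frac{\tan x}{x}<3+\frac{1}{\cos x}\sum_{k=2}^{2n}(-1)^{k}C(k)\,x^{2k}.$$ (ii) For every $x\in(0,\pi/2)$ and every integer $m\ge 2$, $$\Big|\,2\,\frac{\sin x}{x}+\frac{\tan x}{x}-\Big(3+\frac{1}{\cos x}\sum_{k=2}^{m}(-1)^{k}C(k)\,x^{2k}\Big)\Big|<C(m+1)\,\frac{x^{2m+2}}{\cos x}.$$
   Context: $\mathbb{N}=\{1,2,3,\dots\}$. *)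

theory Defs
  imports Complex_Main
begin

definition C :: "nat \<Rightarrow> real" where
  "C k = 2 * (4 ^ k - 3 * real k - 1) / fact (2 * k + 1)"

end

theory Submission
  imports Defs
begin

lemma four_pow_bound: "k \<ge> 2 \<Longrightarrow> 15 * real k + 2 \<le> 2 * 4 ^ k"
proof (induction k rule: dec_induct)
  case base then show ?case by simp
next
  case (step k) then show ?case by simp
qed

lemma C_pos: "k \<ge> 2 \<Longrightarrow> C k > 0"
proof -
  assume k: "k \<ge> 2"
  have "15 * real k + 2 \<le> 2 * 4 ^ k" using four_pow_bound[OF k] .
  then have "4 ^ k - 3 * real k - 1 > 0" using k by linarith
  then show ?thesis unfolding C_def by simp
qed

lemma C_dec:
  assumes k: "k \<ge> 2" and x: "0 < x" "x < 2"
  shows "C (Suc k) * x ^ (2 * Suc k) < C k * x ^ (2 * k)"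
proof -
  have b: "15 * real k + 2 \<le> 2 * 4 ^ k" using four_pow_bound[OF k] .
  have p: "4 ^ k - 3 * real k - 1 > 0" using k b by linarith
  have q: "(4::real) ^ Suc k - 3 * real (Suc k) - 1 \<le> 6 * (4 ^ k - 3 * real k - 1)"
    using b by simp
  have x2: "x ^ 2 < 4" using power_strict_mono[of x 2 2] x by simp
  have kk: "(30::real) \<le> (2 * real k + 2) * (2 * real k + 3)"
  proof -
    have "real k \<ge> 2" using k by simp
    then have "(6::real) * 5 \<le> (2 * real k + 2) * (2 * real k + 3)"
      by (intro mult_mono) auto
    then show ?thesis by simp
  qed
  have f: "fact (2 * Suc k + 1) = (2 * real k + 2) * (2 * real k + 3) * (fact (2 * k + 1) :: real)"
  proof -
    have "2 * Suc k + 1 = Suc (Suc (2 * k + 1))" by simp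
    then have "(fact (2 * Suc k + 1) :: real) = fact (Suc (Suc (2 * k + 1)))" by simp
    also have "\<dots> = (2 * real k + 3) * ((2 * real k + 2) * fact (2 * k + 1))"
      by (simp add: algebra_simps)
    finally show ?thesis by simp
  qed
  define A where "A = (4::real) ^ k - 3 * real k - 1"
  define B where "B = (4::real) ^ Suc k - 3 * real (Suc k) - 1"
  define F where "F = (fact (2 * k + 1) :: real)"
  define D where "D = (2 * real k + 2) * (2 * real k + 3)"
  have Fp: "F > 0" unfolding F_def by simp
  have Bnn: "B \<ge> 0"
  proof -
    have "15 * real (Suc k) + 2 \<le> 2 * 4 ^ Suc k" using four_pow_bound[of "Suc k"] k by simp
    then show ?thesis unfolding B_def by simp
  qed
  have "B * x ^ 2 \<le> B * 4" using Bnn x2 by (simp add: mult_left_mono)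
  also have "\<dots> \<le> 6 * A * 4" using q unfolding A_def B_def by simp
  also have "\<dots> < D * A"
  proof -
    have "24 < D" using kk unfolding D_def by simp
    then have "24 * A < D * A" using p unfolding A_def by (intro mult_strict_right_mono) auto
    then show ?thesis by simp
  qed
  finally have main: "B * x ^ 2 < D * A" .
  have "C (Suc k) * x ^ (2 * Suc k) = (2 * B / (D * F)) * x ^ 2 * x ^ (2 * k)"
  proof -
    have c1: "C (Suc k) = 2 * B / (D * F)"
      unfolding C_def B_def D_def F_def f by simp
    have c2: "x ^ (2 * Suc k) = x ^ 2 * x ^ (2 * k)"
      by (simp add: power_add[symmetric])
    show ?thesis unfolding c1 c2 by simp
  qed
  also have "\<dots> = (2 * (B * x ^ 2) / (D * F)) * x ^ (2 * k)" by simp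
  also have "\<dots> < (2 * (D * A) / (D * F)) * x ^ (2 * k)"
  proof -
    have "D > 0" unfolding D_def by simp
    then have "2 * (B * x ^ 2) / (D * F) < 2 * (D * A) / (D * F)"
      using main Fp by (intro divide_strict_right_mono) auto
    moreover have "x ^ (2 * k) > 0" using x by simp
    ultimately show ?thesis by (intro mult_strict_right_mono) auto
  qed
  also have "\<dots> = C k * x ^ (2 * k)"
    unfolding C_def A_def F_def D_def by simp
  finally show ?thesis .
qed

lemma series:
  fixes x :: real assumes x: "x \<noteq> 0"
  shows "(\<lambda>k. (-1) ^ k * C k * x ^ (2 * k)) sums ((sin (2 * x) + sin x) / x - 3 * cos x)"
proof -
  have s2: "(\<lambda>n. (- 1) ^ n / (fact (2 * n + 1)) * (2 * x) ^ (2 * n + 1) / x) sums (sin (2 * x) / x)"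
    using sums_divide[OF sin_paired] .
  have s1: "(\<lambda>n. (- 1) ^ n / (fact (2 * n + 1)) * x ^ (2 * n + 1) / x) sums (sin x / x)"
    using sums_divide[OF sin_paired] .
  have c: "(\<lambda>n. 3 * ((- 1) ^ n / (fact (2 * n)) * x ^ (2 * n))) sums (3 * cos x)"
    using sums_mult[OF cos_paired] .
  have all: "(\<lambda>n. (- 1) ^ n / (fact (2 * n + 1)) * (2 * x) ^ (2 * n + 1) / x
      + (- 1) ^ n / (fact (2 * n + 1)) * x ^ (2 * n + 1) / x
      - 3 * ((- 1) ^ n / (fact (2 * n)) * x ^ (2 * n))) sums (sin (2 * x) / x + sin x / x - 3 * cos x)"
    using sums_diff[OF sums_add[OF s2 s1] c] .
  have eq: "(- 1) ^ n / (fact (2 * n + 1)) * (2 * x) ^ (2 * n + 1) / x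
      + (- 1) ^ n / (fact (2 * n + 1)) * x ^ (2 * n + 1) / x
      - 3 * ((- 1) ^ n / (fact (2 * n)) * x ^ (2 * n)) = (-1) ^ n * C n * x ^ (2 * n)" for n
  proof -
    have f: "(fact (2 * n + 1) :: real) = (2 * real n + 1) * fact (2 * n)"
      by (simp add: algebra_simps)
    have fp: "(fact (2 * n) :: real) > 0" by simp
    have p4: "(2::real) ^ (2 * n) = 4 ^ n" by (simp add: power_mult)
    have h1: "(2 * x) ^ (2 * n + 1) / x = 2 * 4 ^ n * x ^ (2 * n)"
      using x p4 by (simp add: power_mult_distrib)
    have h2: "x ^ (2 * n + 1) / x = x ^ (2 * n)" using x by simp
    have r: "A * B / x = A * (B / x)" for A B :: real by simp
    have aux: "s / ((2 * real n + 1) * F) * (2 * q * y) + s / ((2 * real n + 1) * F) * y - 3 * (s / F * y)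
       = s * (2 * (q - 3 * real n - 1) / ((2 * real n + 1) * F)) * y" if "F > 0" for s F q y :: real
    proof -
      have "2 * real n + 1 > 0" by simp
      with that show ?thesis by (simp add: divide_simps) (simp add: algebra_simps)
    qed
    show ?thesis
      unfolding r h1 h2 C_def f using aux[OF fp] by simp
  qed
  show ?thesis using all unfolding eq by (simp add: add_divide_distrib)
qed

lemma tail_bound:
  fixes x :: real and M :: nat
  assumes x: "0 < x" "x < 2" and M: "M \<ge> 1"
  defines "a \<equiv> \<lambda>k. C k * x ^ (2 * k)"
  defines "S \<equiv> (\<Sum>k. (-1) ^ k * a k)"
  assumes summ: "(\<lambda>k. (-1) ^ k * a k) sums S"
  shows "0 < (-1) ^ (M + 1) * (S - (\<Sum>k<M+1. (-1) ^ k * a k))"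
    and "(-1) ^ (M + 1) * (S - (\<Sum>k<M+1. (-1) ^ k * a k)) < a (M + 1)"
proof -
  define b where "b = (\<lambda>j. a (j + M + 1))"
  have apos: "k \<ge> 2 \<Longrightarrow> a k > 0" for k unfolding a_def using C_pos x by simp
  have anonneg: "a k \<ge> 0" for k
  proof (cases "k \<ge> 2")
    case True then show ?thesis using apos[of k] by simp
  next
    case False then have "k = 0 \<or> k = 1" by auto
    then show ?thesis unfolding a_def C_def by auto
  qed
  have adec: "k \<ge> 2 \<Longrightarrow> a (Suc k) < a k" for k unfolding a_def using C_dec x by blast
  have bdec: "b (Suc j) < b j" for j unfolding b_def using adec[of "j + M + 1"] M by simp
  have bnn: "b j \<ge> 0" for j unfolding b_def using anonneg by simp
  have "(\<lambda>k. (-1) ^ k * a k) \<longlonglongrightarrow> 0" using summ summable_LIMSEQ_zero sums_summable by blast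
  then have "(\<lambda>k. \<bar>(-1) ^ k * a k\<bar>) \<longlonglongrightarrow> 0" using tendsto_rabs_zero by blast
  then have "a \<longlonglongrightarrow> 0" using anonneg by (simp add: abs_mult)
  then have b0: "b \<longlonglongrightarrow> 0" unfolding b_def
    using LIMSEQ_ignore_initial_segment[of a 0 "M+1"] by (simp add: add.assoc)
  have L1: "(\<Sum>i<2*1. (-1)^i*b i) \<le> (\<Sum>i. (-1)^i*b i)"
    using summable_Leibniz'(2)[OF b0 bnn] bdec less_imp_le by blast
  have L2: "(\<Sum>i. (-1)^i*b i) \<le> (\<Sum>i<2*1+1. (-1)^i*b i)"
    using summable_Leibniz'(4)[OF b0 bnn] bdec less_imp_le by blast
  have tail: "(\<lambda>i. (-1) ^ (i + (M+1)) * a (i + (M+1))) sums (S - (\<Sum>k<M+1. (-1) ^ k * a k))"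
    using sums_split_initial_segment[OF summ] .
  have "(\<lambda>i. (-1) ^ (i + (M+1)) * a (i + (M+1))) = (\<lambda>i. (-1) ^ (M+1) * ((-1) ^ i * b i))"
    unfolding b_def by (auto simp: power_add add.assoc)
  with tail have "(\<lambda>i. (-1) ^ (M+1) * ((-1) ^ i * b i)) sums (S - (\<Sum>k<M+1. (-1) ^ k * a k))" by simp
  then have "(\<lambda>i. (-1) ^ (M+1) * ((-1) ^ (M+1) * ((-1) ^ i * b i))) sums ((-1) ^ (M+1) * (S - (\<Sum>k<M+1. (-1) ^ k * a k)))"
    using sums_mult by blast
  moreover have "(\<lambda>i. (-1) ^ (M+1) * ((-1) ^ (M+1) * ((-1) ^ i * b i))) = (\<lambda>i. (-1) ^ i * b i)"
    by (cases "even (M+1)") auto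
  ultimately have T: "(\<lambda>i. (-1) ^ i * b i) sums ((-1) ^ (M+1) * (S - (\<Sum>k<M+1. (-1) ^ k * a k)))" by simp
  then have Teq: "(\<Sum>i. (-1)^i*b i) = (-1) ^ (M+1) * (S - (\<Sum>k<M+1. (-1) ^ k * a k))"
    using sums_unique by metis
  have s2: "(\<Sum>i<2*1. (-1)^i*b i :: real) = b 0 - b 1" by (simp add: numeral_2_eq_2)
  have s3: "(\<Sum>i<2*1+1. (-1)^i*b i :: real) = b 0 - b 1 + b 2" by (simp add: numeral_2_eq_2 numeral_3_eq_3)
  show "0 < (-1) ^ (M + 1) * (S - (\<Sum>k<M+1. (-1) ^ k * a k))"
  proof -
    have "b 1 < b 0" using bdec[of 0] by simp
    then show ?thesis using L1 s2 Teq by linarith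
  qed
  show "(-1) ^ (M + 1) * (S - (\<Sum>k<M+1. (-1) ^ k * a k)) < a (M + 1)"
  proof -
    have "b 0 = a (M + 1)" by (simp add: b_def)
    moreover have "b 2 < b 1" using bdec[of 1] by (simp add: numeral_2_eq_2)
    ultimately show ?thesis using L2 s3 Teq by linarith
  qed
qed


lemma sum_shift:
  fixes x :: real
  shows "(\<Sum>k=2..M. (-1) ^ k * C k * x ^ (2*k)) = (\<Sum>k<M+1. (-1) ^ k * (C k * x ^ (2*k)))"
proof (rule sum.mono_neutral_cong_left)
  show "finite {..<M+1}" by simp
  show "{2..M} \<subseteq> {..<M+1}" by auto
  show "\<forall>i\<in>{..<M + 1} - {2..M}. (-1) ^ i * (C i * x ^ (2*i)) = 0"
  proof
    fix i assume "i \<in> {..<M + 1} - {2..M}"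
    then have "i = 0 \<or> i = 1" by auto
    then show "(-1) ^ i * (C i * x ^ (2*i)) = 0" unfolding C_def by auto
  qed
  show "\<And>i. i \<in> {2..M} \<Longrightarrow> (-1) ^ i * C i * x ^ (2*i) = (-1) ^ i * (C i * x ^ (2*i))"
    by (simp add: mult.assoc)
qed

lemma key:
  fixes x :: real and M :: nat
  assumes x: "0 < x" "x < pi / 2" and M: "M \<ge> 1"
  defines "S \<equiv> (sin (2 * x) + sin x) / x - 3 * cos x"
  defines "T \<equiv> (\<Sum>k=2..M. (-1) ^ k * C k * x ^ (2*k))"
  shows "2 * (sin x / x) + tan x / x = 3 + (1 / cos x) * S"
    and "0 < (-1) ^ (M + 1) * (S - T)"
    and "(-1) ^ (M + 1) * (S - T) < C (M + 1) * x ^ (2*(M+1))"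
    and "cos x > 0"
proof -
  show c: "cos x > 0" using x by (intro cos_gt_zero_pi) auto
  show "2 * (sin x / x) + tan x / x = 3 + (1 / cos x) * S"
    unfolding S_def tan_def sin_double using c x by (simp add: field_simps)
  have x2: "x < 2" using x pi_less_4 by linarith
  have ser: "(\<lambda>k. (-1) ^ k * (C k * x ^ (2 * k))) sums S"
    using series[of x] x unfolding S_def by (simp add: mult.assoc)
  then have Seq: "S = (\<Sum>k. (-1) ^ k * (C k * x ^ (2 * k)))" using sums_unique by blast
  have ser2: "(\<lambda>k. (-1) ^ k * (C k * x ^ (2 * k))) sums (\<Sum>k. (-1) ^ k * (C k * x ^ (2 * k)))"
    using ser Seq by simp
  have Teq: "T = (\<Sum>k<M+1. (-1) ^ k * (C k * x ^ (2*k)))" unfolding T_def by (rule sum_shift)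
  show "0 < (-1) ^ (M + 1) * (S - T)"
    using tail_bound(1)[OF x(1) x2 M ser2] unfolding Teq Seq .
  show "(-1) ^ (M + 1) * (S - T) < C (M + 1) * x ^ (2*(M+1))"
    using tail_bound(2)[OF x(1) x2 M ser2] unfolding Teq Seq .
qed

theorem theorem3:
  shows "(\<forall>x::real. \<forall>n::nat. 0 < x \<and> x < pi / 2 \<and> n \<ge> 1 \<longrightarrow>
            3 + (1 / cos x) * (\<Sum>k=2..2*n+1. (-1) ^ k * C k * x ^ (2*k))
              < 2 * (sin x / x) + tan x / x
          \<and> 2 * (sin x / x) + tan x / x
              < 3 + (1 / cos x) * (\<Sum>k=2..2*n. (-1) ^ k * C k * x ^ (2*k)))
       \<and> (\<forall>x::real. \<forall>m::nat. 0 < x \<and> x < pi / 2 \<and> m \<ge> 2 \<longrightarrow>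
            \<bar>2 * (sin x / x) + tan x / x
              - (3 + (1 / cos x) * (\<Sum>k=2..m. (-1) ^ k * C k * x ^ (2*k)))\<bar>
              < C (m + 1) * x ^ (2*m+2) / cos x)"
proof (intro conjI allI impI; elim conjE)
  fix x :: real and n :: nat
  assume x: "0 < x" "x < pi / 2" and n: "n \<ge> 1"
  define S where "S = (sin (2 * x) + sin x) / x - 3 * cos x"
  have c: "cos x > 0" using key(4)[OF x n] .
  have L: "2 * (sin x / x) + tan x / x = 3 + (1 / cos x) * S" using key(1)[OF x n] unfolding S_def .
  have "0 < (-1) ^ (2*n+1+1) * (S - (\<Sum>k=2..2*n+1. (-1) ^ k * C k * x ^ (2*k)))"
    using key(2)[of x "2*n+1"] x unfolding S_def by simp
  then have a: "(\<Sum>k=2..2*n+1. (-1) ^ k * C k * x ^ (2*k)) < S" by simp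
  have "0 < (-1) ^ (2*n+1) * (S - (\<Sum>k=2..2*n. (-1) ^ k * C k * x ^ (2*k)))"
    using key(2)[of x "2*n"] x n unfolding S_def by simp
  then have b: "S < (\<Sum>k=2..2*n. (-1) ^ k * C k * x ^ (2*k))" by simp
  show "3 + (1 / cos x) * (\<Sum>k=2..2*n+1. (-1) ^ k * C k * x ^ (2*k)) < 2 * (sin x / x) + tan x / x"
    unfolding L using a c by (simp add: divide_strict_right_mono)
  show "2 * (sin x / x) + tan x / x < 3 + (1 / cos x) * (\<Sum>k=2..2*n. (-1) ^ k * C k * x ^ (2*k))"
    unfolding L using b c by (simp add: divide_strict_right_mono)
next
  fix x :: real and m :: nat
  assume x: "0 < x" "x < pi / 2" and m: "m \<ge> 2"
  then have m1: "m \<ge> 1" by simp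
  define S where "S = (sin (2 * x) + sin x) / x - 3 * cos x"
  define T where "T = (\<Sum>k=2..m. (-1) ^ k * C k * x ^ (2*k))"
  have c: "cos x > 0" using key(4)[OF x m1] .
  have L: "2 * (sin x / x) + tan x / x = 3 + (1 / cos x) * S" using key(1)[OF x m1] unfolding S_def .
  have e1: "0 < (-1) ^ (m + 1) * (S - T)" using key(2)[OF x m1] unfolding S_def T_def .
  have e2: "(-1) ^ (m + 1) * (S - T) < C (m + 1) * x ^ (2*(m+1))" using key(3)[OF x m1] unfolding S_def T_def .
  have ab: "\<bar>S - T\<bar> = (-1) ^ (m + 1) * (S - T)"
  proof -
    have "\<bar>(-1::real) ^ (m + 1) * (S - T)\<bar> = \<bar>S - T\<bar>" by (simp add: abs_mult)
    then show ?thesis using e1 by simp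
  qed
  have "\<bar>S - T\<bar> < C (m + 1) * x ^ (2*m+2)" using ab e2 by simp
  then have "\<bar>S - T\<bar> / cos x < C (m + 1) * x ^ (2*m+2) / cos x"
    using c by (simp add: divide_strict_right_mono)
  moreover have "\<bar>3 + (1 / cos x) * S - (3 + (1 / cos x) * T)\<bar> = \<bar>S - T\<bar> / cos x"
  proof -
    have "3 + (1 / cos x) * S - (3 + (1 / cos x) * T) = (S - T) / cos x" by (simp add: diff_divide_distrib)
    then show ?thesis using c by simp
  qed
  ultimately show "\<bar>2 * (sin x / x) + tan x / x - (3 + (1 / cos x) * (\<Sum>k=2..m. (-1) ^ k * C k * x ^ (2*k)))\<bar>
              < C (m + 1) * x ^ (2*m+2) / cos x"
    unfolding L T_def[symmetric] by simp
qed

end
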